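(* Under $\mathcal H_0(\boldsymbol T):\boldsymbol T\boldsymbol\mu=\mathbf 0$ and one of the asymptotic frameworks (I)–(V), let $f_P=\operatorname{tr}^3((\boldsymbol T\boldsymbol V_N)^2)/\operatorname{tr}^2((\boldsymbol T\boldsymbol V_N)^3)$ and $K_{f_P}=(\chi^2_{f_P}-f_P)/\sqrt{2f_P}$, where $\chi^2_{f}$ denotes a chi-squared random variable with (real) $f>0$ degrees of freedom. Then (a) if $\beta_1\to0$, $K_{f_P}$ converges in distribution to $\mathcal N(0,1)$; (b) if $\beta_1\to1$, $K_{f_P}$ converges in distribution to $(\chi^2_1-1)/\sqrt2$.
   Context: Model: there are $a$ independent groups; for $i=1,\dots,a$, $j=1,\dots,n_i$, $\boldsymbol X_{i,j}\sim\mathcal N_d(\boldsymbol\mu_i,\boldsymbol\Sigma)$ independent, $\boldsymbol\Sigma$ a common positive definite $d\times d$ matrix, $N=\sum_in_i$, $n_{\max}=\max_in_i$. $\boldsymbol T=\boldsymbol T_W\otimes\boldsymbol T_S$ with $\boldsymbol T_W$ ($a\times a$) and $\boldsymbol T_S$ ($d\times d$) nonzero symmetric idempotent matrices. $\boldsymbol V_N=\bigoplus_{i=1}^a\frac{N}{n_i}\boldsymbol\Sigma$ (block diagonal); $\lambda_1\ge\dots\ge\lambda_{ad}$ are the eigenvalues of $\boldsymbol T\boldsymbol V_N\boldsymbol T$ and $\beta_1=\lambda_1/\sqrt{\sum_{\ell=1}^{ad}\lambda_\ell^2}$. Asymptotic frameworks: all quantities may depend on an index along which $N\to\infty$, and one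 of the following holds (quantities not listed stay bounded): (I) $a\to\infty$; (II) $a,d\to\infty$; (III) $a,n_{\max}\to\infty$; (IV) $d,n_{\max}\to\infty$; (V) $a,d,n_{\max}\to\infty$. *)

theory Defs
  imports "HOL-Probability.Probability" "Jordan_Normal_Form.Jordan_Normal_Form"
begin

definition mtrace :: "real Matrix.mat \<Rightarrow> real" where
  "mtrace A = (\<Sum>i<dim_row A. A $$ (i, i))"

definition sym_idem_nonzero :: "nat \<Rightarrow> real Matrix.mat \<Rightarrow> bool" where
  "sym_idem_nonzero n A \<longleftrightarrow> A \<in> carrier_mat n n \<and> transpose_mat A = A \<and> A * A = A
      \<and> A \<noteq> 0\<^sub>m n n"

definition pos_def_mat :: "nat \<Rightarrow> real Matrix.mat \<Rightarrow> bool" where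
  "pos_def_mat n A \<longleftrightarrow> A \<in> carrier_mat n n \<and> transpose_mat A = A \<and>
      (\<forall>v \<in> carrier_vec n. v \<noteq> 0\<^sub>v n \<longrightarrow> v \<bullet> (A *\<^sub>v v) > 0)"

definition kron :: "nat \<Rightarrow> nat \<Rightarrow> real Matrix.mat \<Rightarrow> real Matrix.mat \<Rightarrow> real Matrix.mat" where
  "kron a d A B = Matrix.mat (a*d) (a*d) (\<lambda>(r, c). A $$ (r div d, c div d) * B $$ (r mod d, c mod d))"

text \<open>Block-diagonal matrix  V_N = \<oplus>_{i<a} (N / n_i) \<Sigma>, groups indexed 0..a-1.\<close>
definition VN :: "nat \<Rightarrow> nat \<Rightarrow> (nat \<Rightarrow> nat) \<Rightarrow> real Matrix.mat \<Rightarrow> real Matrix.mat" where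
  "VN a d n \<Sigma> = Matrix.mat (a*d) (a*d) (\<lambda>(r, c).
      if r div d = c div d
      then real (\<Sum>i<a. n i) / real (n (r div d)) * \<Sigma> $$ (r mod d, c mod d)
      else 0)"

definition eigvals :: "real Matrix.mat \<Rightarrow> real multiset" where
  "eigvals A = proots (char_poly A)"

definition beta1 :: "real Matrix.mat \<Rightarrow> real" where
  "beta1 A = Max (set_mset (eigvals A)) / sqrt (sum_mset (image_mset (\<lambda>x. x\<^sup>2) (eigvals A)))"

definition fP :: "real Matrix.mat \<Rightarrow> real Matrix.mat \<Rightarrow> real" where
  "fP T V = (mtrace ((T * V) ^\<^sub>m 2)) ^ 3 / (mtrace ((T * V) ^\<^sub>m 3)) ^ 2"

definition chisq_density :: "real \<Rightarrow> real \<Rightarrow> real" where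
  "chisq_density f x = (if x > 0 then x powr (f/2 - 1) * exp (- x/2) / (2 powr (f/2) * Gamma (f/2)) else 0)"

definition chisq_distribution :: "real \<Rightarrow> real measure" where
  "chisq_distribution f = density lborel (chisq_density f)"

definition K_distribution :: "real \<Rightarrow> real measure" where
  "K_distribution f = distr (chisq_distribution f) borel (\<lambda>x. (x - f) / sqrt (2 * f))"

end

theory Submission
  imports Defs "Jordan_Normal_Form.Schur_Decomposition" "HOL-Real_Asymp.Real_Asymp"
begin



interpretation of_real_poly_hom': map_poly_comm_ring_hom "of_real :: real \<Rightarrow> complex" ..

lemma map_poly_of_real_prod_lin:
  "map_poly (of_real :: real \<Rightarrow> complex) (\<Prod>r\<leftarrow>rs. [:-r,1:]) = (\<Prod>r\<leftarrow>rs. [:-of_real r,1:])"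
proof (induction rs)
  case (Cons a rs)
  have "map_poly (of_real :: real \<Rightarrow> complex) ([:-a,1:] * (\<Prod>r\<leftarrow>rs. [:-r,1:]))
     = map_poly of_real [:-a,1:] * map_poly of_real (\<Prod>r\<leftarrow>rs. [:-r,1:])"
    by (rule of_real_poly_hom'.hom_mult)
  then show ?case using Cons by simp
qed simp

lemma map_poly_of_real_inj:
  fixes p q :: "real poly"
  assumes "map_poly (of_real :: real \<Rightarrow> complex) p = map_poly of_real q"
  shows "p = q"
  using assms by (auto simp: poly_eq_iff coeff_map_poly)

lemma real_sym_char_poly_split:
  fixes A :: "real mat"
  assumes A: "A \<in> carrier_mat n n" and sym: "transpose_mat A = A"
  shows "\<exists>rs. char_poly A = (\<Prod>r\<leftarrow>rs. [:-r,1:]) \<and> length rs = n"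
proof -
  define Ac where "Ac = map_mat (of_real :: real \<Rightarrow> complex) A"
  have Ac: "Ac \<in> carrier_mat n n" using A by (auto simp: Ac_def)
  have cp: "char_poly Ac = map_poly of_real (char_poly A)"
    using of_real_hom.char_poly_hom[OF A] by (simp add: Ac_def)
  obtain es where es: "char_poly Ac = (\<Prod>a\<leftarrow>es. [:- a, 1:])" "length es = n"
    using char_poly_factorized[OF Ac] by blast
  have real: "e = of_real (Re e)" if e: "e \<in> set es" for e
  proof -
    have "poly (char_poly Ac) e = 0" unfolding es(1) using e
      by (auto simp: poly_prod_list_zero_iff)
    then have "eigenvalue Ac e" using eigenvalue_root_char_poly[OF Ac] by simp
    then obtain v where v: "eigenvector Ac v e" unfolding eigenvalue_def by blast
    then have vc: "v \<in> carrier_vec n" and v0: "v \<noteq> 0\<^sub>v n" and ev: "Ac *\<^sub>v v = e \<cdot>\<^sub>v v"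
      using Ac by (auto simp: eigenvector_def)
    define S where "S = (\<Sum>i<n. cnj (v $ i) * (Ac *\<^sub>v v) $ i)"
    define W where "W = (\<Sum>i<n. cnj (v $ i) * v $ i)"
    have S1: "S = e * W" unfolding S_def W_def ev using vc
      by (auto simp: sum_distrib_left intro!: sum.cong)
    have AcS: "(Ac *\<^sub>v v) $ i = (\<Sum>j<n. of_real (A $$ (i,j)) * v $ j)" if "i < n" for i
      using that A vc by (auto simp: Ac_def mult_mat_vec_def scalar_prod_def lessThan_atLeast0 intro!: sum.cong)
    have symA: "A $$ (i,j) = A $$ (j,i)" if "i < n" "j < n" for i j
      using arg_cong[OF sym, of "\<lambda>B. B $$ (i,j)"] that A by auto
    have "cnj S = (\<Sum>i<n. v $ i * (\<Sum>j<n. of_real (A $$ (i,j)) * cnj (v $ j)))"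
      unfolding S_def by (auto simp: AcS sum_distrib_left intro!: sum.cong)
    also have "\<dots> = (\<Sum>j<n. cnj (v $ j) * (\<Sum>i<n. of_real (A $$ (j,i)) * v $ i))"
      unfolding sum_distrib_left by (subst (2) sum.swap) (auto simp: symA mult_ac intro!: sum.cong)
    also have "\<dots> = S" unfolding S_def by (auto simp: AcS)
    finally have cS: "cnj S = S" .
    define w where "w = (\<Sum>i<n. (cmod (v $ i))\<^sup>2)"
    have Wr: "W = of_real w" unfolding w_def
      unfolding W_def of_real_sum by (auto simp: mult.commute[of "cnj _"] complex_norm_square[symmetric] intro!: sum.cong)
    have "\<exists>i<n. v $ i \<noteq> 0" using v0 vc by (auto simp: vec_eq_iff)
    then obtain i where i: "i < n" "v $ i \<noteq> 0" by blast
    have "w > 0" unfolding w_def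
      by (rule sum_pos2[of _ i]) (use i in auto)
    then have W0: "W \<noteq> 0" unfolding Wr by simp
    have W1: "cnj W = W" unfolding Wr by simp
    have "cnj (e * W) = e * W" using cS unfolding S1 .
    then have "cnj e * W = e * W" using W1 by simp
    then have "cnj e = e" using W0 by simp
    then have "Im e = 0" using \<open>cnj e = e\<close> unfolding complex_eq_iff by simp
    then show ?thesis by (simp add: complex_eq_iff)
  qed
  define rs where "rs = map Re es"
  have "es = map of_real rs" unfolding rs_def using real
    by (induction es) auto
  then have "map_poly of_real (char_poly A) = map_poly (of_real :: real \<Rightarrow> complex) (\<Prod>r\<leftarrow>rs. [:-r,1:])"
    using cp es(1) by (simp add: map_poly_of_real_prod_lin o_def)
  then have "char_poly A = (\<Prod>r\<leftarrow>rs. [:-r,1:])" by (rule map_poly_of_real_inj)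
  then show ?thesis using es(2) \<open>es = map of_real rs\<close> by auto
qed



lemma proots_prod_lin: "proots (\<Prod>r\<leftarrow>rs. [:-r,1::real:]) = mset rs"
proof (induction rs)
  case (Cons a rs)
  have nz: "(\<Prod>r\<leftarrow>rs. [:-r,1::real:]) \<noteq> 0"
    by (auto simp: prod_list_zero_iff)
  have "proots ([:-a,1:] * (\<Prod>r\<leftarrow>rs. [:-r,1::real:])) = proots [:-a,1:] + proots (\<Prod>r\<leftarrow>rs. [:-r,1::real:])"
    by (rule proots_mult) (use nz in auto)
  then show ?case using Cons by (simp add: proots_linear_factor)
qed simp

lemma mtrace_comm:
  fixes X Y :: "real mat"
  assumes "X \<in> carrier_mat n m" "Y \<in> carrier_mat m n"
  shows "mtrace (X * Y) = mtrace (Y * X)"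
proof -
  have "mtrace (X * Y) = (\<Sum>i<n. \<Sum>j<m. X $$ (i,j) * Y $$ (j,i))"
    using assms by (auto simp: mtrace_def scalar_prod_def lessThan_atLeast0 intro!: sum.cong)
  also have "\<dots> = (\<Sum>j<m. \<Sum>i<n. Y $$ (j,i) * X $$ (i,j))"
    by (subst sum.swap) (auto simp: mult.commute)
  also have "\<dots> = mtrace (Y * X)"
    using assms by (auto simp: mtrace_def scalar_prod_def lessThan_atLeast0 intro!: sum.cong)
  finally show ?thesis .
qed

lemma upper_tri_pow:
  fixes B :: "real mat"
  assumes B: "B \<in> carrier_mat n n" and ut: "upper_triangular B"
  shows "upper_triangular (B ^\<^sub>m k) \<and> (\<forall>i<n. (B ^\<^sub>m k) $$ (i,i) = (B $$ (i,i)) ^ k)"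
proof (induction k)
  case 0
  then show ?case using B by auto
next
  case (Suc k)
  let ?C = "B ^\<^sub>m k"
  have C: "?C \<in> carrier_mat n n" using B by auto
  have utC: "upper_triangular ?C" and dC: "\<And>i. i<n \<Longrightarrow> ?C $$ (i,i) = (B $$ (i,i)) ^ k" using Suc by auto
  have ent: "(?C * B) $$ (i,j) = (\<Sum>l<n. ?C $$ (i,l) * B $$ (l,j))" if "i<n" "j<n" for i j
    using that B C by (auto simp: scalar_prod_def lessThan_atLeast0 intro!: sum.cong)
  have Cz: "?C $$ (i,l) = 0" if "l < i" "i < n" for i l using utC C that by (auto simp: upper_triangular_def)
  have Bz: "B $$ (l,j) = 0" if "j < l" "l < n" for l j using ut B that by (auto simp: upper_triangular_def)
  have "upper_triangular (?C * B)"
  proof (rule upper_triangularI)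
    fix i j assume ij: "j < i" "i < dim_row (?C * B)"
    then have i: "i < n" using C by auto
    have "(\<Sum>l<n. ?C $$ (i,l) * B $$ (l,j)) = 0"
    proof (rule sum.neutral, intro ballI)
      fix l assume l: "l \<in> {..<n}"
      show "?C $$ (i,l) * B $$ (l,j) = 0"
      proof (cases "l < i")
        case True then show ?thesis using Cz i by simp
      next
        case False then have "j < l" using ij by simp
        then show ?thesis using Bz l by simp
      qed
    qed
    then show "(?C * B) $$ (i,j) = 0" using ent[of i j] i ij by simp
  qed
  moreover have "(?C * B) $$ (i,i) = (B $$ (i,i)) ^ Suc k" if i: "i < n" for i
  proof -
    have "(\<Sum>l<n. ?C $$ (i,l) * B $$ (l,i)) = ?C $$ (i,i) * B $$ (i,i)"
    proof -
      have "(\<Sum>l<n. ?C $$ (i,l) * B $$ (l,i)) = ?C $$ (i,i) * B $$ (i,i) + (\<Sum>l\<in>{..<n}-{i}. ?C $$ (i,l) * B $$ (l,i))"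
        by (rule sum.remove) (use i in auto)
      also have "(\<Sum>l\<in>{..<n}-{i}. ?C $$ (i,l) * B $$ (l,i)) = 0"
      proof (rule sum.neutral, intro ballI)
        fix l assume l: "l \<in> {..<n}-{i}"
        show "?C $$ (i,l) * B $$ (l,i) = 0"
        proof (cases "l < i")
          case True then show ?thesis using Cz i by simp
        next
          case False then have "i < l" using l by auto
          then show ?thesis using Bz l by simp
        qed
      qed
      finally show ?thesis by simp
    qed
    then show ?thesis using ent[of i i] i dC[OF i] by simp
  qed
  ultimately show ?case using C B by (simp add: pow_mat.simps)
qed

lemma trace_pow_eigs:
  fixes A :: "real mat"
  assumes A: "A \<in> carrier_mat n n" and cp: "char_poly A = (\<Prod>r\<leftarrow>rs. [:-r,1:])"
  shows "mtrace (A ^\<^sub>m k) = (\<Sum>r\<leftarrow>rs. r ^ k)"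
proof -
  obtain B P Q where sd: "schur_decomposition A rs = (B,P,Q)" by (cases "schur_decomposition A rs") auto
  from schur_decomposition[OF A cp sd] have sw: "similar_mat_wit A B P Q" and ut: "upper_triangular B"
    and dg: "diag_mat B = rs" by auto
  from similar_mat_witD2[OF A sw] have B: "B \<in> carrier_mat n n" and P: "P \<in> carrier_mat n n"
    and Q: "Q \<in> carrier_mat n n" and QP: "Q * P = 1\<^sub>m n" by auto
  have pw: "A ^\<^sub>m k = P * B ^\<^sub>m k * Q" by (rule similar_mat_wit_pow_id[OF sw])
  have Bk: "B ^\<^sub>m k \<in> carrier_mat n n" using B by auto
  have "mtrace (A ^\<^sub>m k) = mtrace (Q * (P * B ^\<^sub>m k))"
    unfolding pw by (rule mtrace_comm[of _ n n]) (use P Bk Q in auto)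
  also have "Q * (P * B ^\<^sub>m k) = B ^\<^sub>m k"
    using P Bk Q QP by (simp add: assoc_mult_mat[symmetric, of Q n n P n "B ^\<^sub>m k" n] left_mult_one_mat[OF Bk])
  also have "mtrace (B ^\<^sub>m k) = (\<Sum>i<n. (B $$ (i,i)) ^ k)"
    using upper_tri_pow[OF B ut, of k] B by (auto simp: mtrace_def)
  also have "\<dots> = (\<Sum>r\<leftarrow>rs. r ^ k)"
    unfolding dg[symmetric] diag_mat_def using B
    by (simp add: interv_sum_list_conv_sum_set_nat lessThan_atLeast0)
  finally show ?thesis .
qed



lemma sum_split_blocks:
  fixes f :: "nat \<Rightarrow> 'b::comm_monoid_add"
  assumes d: "d > 0"
  shows "(\<Sum>r<a*d. f r) = (\<Sum>i<a. \<Sum>k<d. f (i*d+k))"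
proof -
  have bij: "bij_betw (\<lambda>(i,k). i*d+k) ({..<a} \<times> {..<d}) {..<a*d}"
  proof (rule bij_betwI[where g="\<lambda>r. (r div d, r mod d)"])
    show "(\<lambda>(i,k). i*d+k) \<in> {..<a} \<times> {..<d} \<rightarrow> {..<a*d}"
    proof
      fix x assume "x \<in> {..<a} \<times> {..<d}"
      then obtain i k where x: "x = (i,k)" "i < a" "k < d" by auto
      have "i*d+k < i*d+d" using x by simp
      also have "\<dots> = (i+1)*d" by simp
      also have "\<dots> \<le> a*d" using x by (intro mult_right_mono) auto
      finally show "(case x of (i,k) \<Rightarrow> i*d+k) \<in> {..<a*d}" using x by simp
    qed
    show "(\<lambda>r. (r div d, r mod d)) \<in> {..<a*d} \<rightarrow> {..<a} \<times> {..<d}"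
      using d by (auto simp: less_mult_imp_div_less)
    show "(\<lambda>r. (r div d, r mod d)) (case x of (i,k) \<Rightarrow> i*d+k) = x" if "x \<in> {..<a} \<times> {..<d}" for x
      using that d by auto
    show "(case (\<lambda>r. (r div d, r mod d)) y of (i,k) \<Rightarrow> i*d+k) = y" if "y \<in> {..<a*d}" for y
      by (simp add: mult.commute)
  qed
  have "(\<Sum>r<a*d. f r) = (\<Sum>x\<in>{..<a} \<times> {..<d}. f ((\<lambda>(i,k). i*d+k) x))"
    using sum.reindex_bij_betw[OF bij, of f] by simp
  also have "\<dots> = (\<Sum>i<a. \<Sum>k<d. f (i*d+k))"
    by (simp add: sum.cartesian_product')
  finally show ?thesis .
qed

lemma blk_div[simp]: "k < d \<Longrightarrow> (i*d+k) div d = i" and blk_mod[simp]: "k < (d::nat) \<Longrightarrow> (i*d+k) mod d = k"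
  by auto

lemma VN_quad:
  fixes \<Sigma> :: "real mat"
  assumes d: "d > 0" and S: "\<Sigma> \<in> carrier_mat d d" and u: "u \<in> carrier_vec (a*d)"
  shows "u \<bullet> (VN a d n \<Sigma> *\<^sub>v u) =
    (\<Sum>i<a. real (\<Sum>i<a. n i) / real (n i) * (vec d (\<lambda>k. u $ (i*d+k)) \<bullet> (\<Sigma> *\<^sub>v vec d (\<lambda>k. u $ (i*d+k)))))"
proof -
  let ?c = "\<lambda>i. real (\<Sum>i<a. n i) / real (n i)"
  let ?w = "\<lambda>i. vec d (\<lambda>k. u $ (i*d+k))"
  have V: "VN a d n \<Sigma> \<in> carrier_mat (a*d) (a*d)" by (simp add: VN_def)
  have ent: "VN a d n \<Sigma> $$ (r,c) = (if r div d = c div d then ?c (r div d) * \<Sigma> $$ (r mod d, c mod d) else 0)"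
    if "r < a*d" "c < a*d" for r c using that by (simp add: VN_def)
  have "u \<bullet> (VN a d n \<Sigma> *\<^sub>v u) = (\<Sum>r<a*d. u $ r * (\<Sum>c<a*d. VN a d n \<Sigma> $$ (r,c) * u $ c))"
    using u V by (auto simp: scalar_prod_def mult_mat_vec_def lessThan_atLeast0 intro!: sum.cong)
  also have "\<dots> = (\<Sum>i<a. \<Sum>k<d. u $ (i*d+k) * (\<Sum>j<a. \<Sum>l<d. VN a d n \<Sigma> $$ (i*d+k,j*d+l) * u $ (j*d+l)))"
    by (simp add: sum_split_blocks[OF d])
  also have "\<dots> = (\<Sum>i<a. \<Sum>k<d. u $ (i*d+k) * (\<Sum>l<d. ?c i * \<Sigma> $$ (k,l) * u $ (i*d+l)))"
  proof (intro sum.cong refl)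
    fix i k assume i: "i \<in> {..<a}" and k: "k \<in> {..<d}"
    have lt: "j*d+l < a*d" if "j < a" "l < d" for j l
    proof -
      have "j*d+l < j*d+d" using that by simp
      also have "\<dots> = (j+1)*d" by simp
      also have "\<dots> \<le> a*d" using that by (intro mult_right_mono) auto
      finally show ?thesis .
    qed
    have "(\<Sum>j<a. \<Sum>l<d. VN a d n \<Sigma> $$ (i*d+k,j*d+l) * u $ (j*d+l))
        = (\<Sum>j<a. if j = i then (\<Sum>l<d. ?c i * \<Sigma> $$ (k,l) * u $ (i*d+l)) else 0)"
      using i k by (intro sum.cong refl) (auto simp: ent lt)
    also have "\<dots> = (\<Sum>l<d. ?c i * \<Sigma> $$ (k,l) * u $ (i*d+l))"
      using i by (simp add: sum.delta)
    finally show "u $ (i*d+k) * (\<Sum>j<a. \<Sum>l<d. VN a d n \<Sigma> $$ (i*d+k,j*d+l) * u $ (j*d+l))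
        = u $ (i*d+k) * (\<Sum>l<d. ?c i * \<Sigma> $$ (k,l) * u $ (i*d+l))" by simp
  qed
  also have "\<dots> = (\<Sum>i<a. ?c i * (?w i \<bullet> (\<Sigma> *\<^sub>v ?w i)))"
    using S by (auto simp: scalar_prod_def mult_mat_vec_def lessThan_atLeast0 sum_distrib_left mult_ac intro!: sum.cong)
  finally show ?thesis .
qed

lemma blk_lt: "j < a \<Longrightarrow> l < d \<Longrightarrow> j*d+l < a*(d::nat)"
proof -
  assume that: "j < a" "l < d"
  have "j*d+l < j*d+d" using that by simp
  also have "\<dots> = (j+1)*d" by simp
  also have "\<dots> \<le> a*d" using that by (intro mult_right_mono) auto
  finally show ?thesis .
qed

lemma nonzero_entry:
  fixes A :: "real mat"
  assumes "A \<in> carrier_mat n n" "A \<noteq> 0\<^sub>m n n"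
  shows "\<exists>p<n. \<exists>q<n. A $$ (p,q) \<noteq> 0"
proof (rule ccontr)
  assume "\<not> ?thesis"
  then have "A = 0\<^sub>m n n" using assms(1) by (intro eq_matI) auto
  then show False using assms(2) by simp
qed

lemma kron_props:
  assumes W: "sym_idem_nonzero a TW" and S: "sym_idem_nonzero d TS" and d: "d > 0"
  defines "T \<equiv> kron a d TW TS"
  shows "T \<in> carrier_mat (a*d) (a*d)" "transpose_mat T = T" "T * T = T"
    "\<exists>v\<in>carrier_vec (a*d). T *\<^sub>v v \<noteq> 0\<^sub>v (a*d)"
proof -
  have W1: "TW \<in> carrier_mat a a" "transpose_mat TW = TW" "TW * TW = TW" "TW \<noteq> 0\<^sub>m a a"
    using W by (auto simp: sym_idem_nonzero_def)
  have S1: "TS \<in> carrier_mat d d" "transpose_mat TS = TS" "TS * TS = TS" "TS \<noteq> 0\<^sub>m d d"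
    using S by (auto simp: sym_idem_nonzero_def)
  have symW: "TW $$ (i,j) = TW $$ (j,i)" if "i < a" "j < a" for i j
    using arg_cong[OF W1(2), of "\<lambda>B. B $$ (i,j)"] that W1(1) by auto
  have symS: "TS $$ (i,j) = TS $$ (j,i)" if "i < d" "j < d" for i j
    using arg_cong[OF S1(2), of "\<lambda>B. B $$ (i,j)"] that S1(1) by auto
  have Tent: "T $$ (r,c) = TW $$ (r div d, c div d) * TS $$ (r mod d, c mod d)" if "r < a*d" "c < a*d" for r c
    using that by (simp add: T_def kron_def)
  show T: "T \<in> carrier_mat (a*d) (a*d)" by (simp add: T_def kron_def)
  have rd: "r div d < a" if "r < a*d" for r using that by (simp add: less_mult_imp_div_less)
  have rm: "r mod d < d" for r using d by simp
  show "transpose_mat T = T"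
    by (rule eq_matI) (use T in \<open>auto simp: Tent symW symS rd rm\<close>)
  show "T * T = T"
  proof (rule eq_matI)
    fix r c assume rc: "r < dim_row T" "c < dim_col T"
    then have r: "r < a*d" and c: "c < a*d" using T by auto
    have "(T * T) $$ (r,c) = (\<Sum>s<a*d. T $$ (r,s) * T $$ (s,c))"
      using T r c by (auto simp: scalar_prod_def lessThan_atLeast0 intro!: sum.cong)
    also have "\<dots> = (\<Sum>j<a. \<Sum>l<d. (TW $$ (r div d, j) * TW $$ (j, c div d)) * (TS $$ (r mod d, l) * TS $$ (l, c mod d)))"
      using r c by (simp add: sum_split_blocks[OF d] Tent blk_lt mult_ac)
    also have "\<dots> = (\<Sum>j<a. TW $$ (r div d, j) * TW $$ (j, c div d)) * (\<Sum>l<d. TS $$ (r mod d, l) * TS $$ (l, c mod d))"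
      by (simp add: sum_product)
    also have "(\<Sum>j<a. TW $$ (r div d, j) * TW $$ (j, c div d)) = (TW * TW) $$ (r div d, c div d)"
      using W1(1) rd[OF r] rd[OF c] by (auto simp: scalar_prod_def lessThan_atLeast0 intro!: sum.cong)
    also have "(\<Sum>l<d. TS $$ (r mod d, l) * TS $$ (l, c mod d)) = (TS * TS) $$ (r mod d, c mod d)"
      using S1(1) rm by (auto simp: scalar_prod_def lessThan_atLeast0 intro!: sum.cong)
    finally show "(T * T) $$ (r,c) = T $$ (r,c)" using W1(3) S1(3) Tent[OF r c] by simp
  qed (use T in auto)
  obtain p q where pq: "p < a" "q < a" "TW $$ (p,q) \<noteq> 0" using nonzero_entry[OF W1(1) W1(4)] by blast
  obtain s t where st: "s < d" "t < d" "TS $$ (s,t) \<noteq> 0" using nonzero_entry[OF S1(1) S1(4)] by blast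
  define v :: "real Matrix.vec" where "v = unit_vec (a*d) (q*d+t)"
  have v: "v \<in> carrier_vec (a*d)" by (simp add: v_def)
  have "(T *\<^sub>v v) $ (p*d+s) = T $$ (p*d+s, q*d+t)"
    using T pq st blk_lt[of p a s d] blk_lt[of q a t d] by (simp add: v_def)
  also have "\<dots> \<noteq> 0" using pq st blk_lt[of p a s d] blk_lt[of q a t d] by (simp add: Tent)
  finally have "T *\<^sub>v v \<noteq> 0\<^sub>v (a*d)" using blk_lt[of p a s d] pq st by auto
  then show "\<exists>v\<in>carrier_vec (a*d). T *\<^sub>v v \<noteq> 0\<^sub>v (a*d)" using v by blast
qed


lemma self_scalar_pos:
  fixes v :: "real Matrix.vec"
  assumes v: "v \<in> carrier_vec n" "v \<noteq> 0\<^sub>v n"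
  shows "v \<bullet> v > 0"
proof -
  have "\<exists>i<n. v $ i \<noteq> 0" using v by (auto simp: vec_eq_iff)
  then obtain i where i: "i < n" "v $ i \<noteq> 0" by blast
  have "v \<bullet> v = (\<Sum>j<n. (v $ j)^2)" using v by (simp add: scalar_prod_def lessThan_atLeast0 power2_eq_square)
  also have "\<dots> > 0" by (rule sum_pos2[of _ i]) (use i in auto)
  finally show ?thesis .
qed



lemma pow2_mat: "A \<in> carrier_mat n n \<Longrightarrow> A ^\<^sub>m 2 = A * (A :: real mat)"
  by (simp add: numeral_eq_Suc)
lemma pow3_mat: "A \<in> carrier_mat n n \<Longrightarrow> A ^\<^sub>m 3 = A * A * (A :: real mat)"
  by (simp add: numeral_eq_Suc)

lemma LA_main:
  fixes \<Sigma> TW TS :: "real mat" and n :: "nat \<Rightarrow> nat"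
  assumes a: "a \<ge> 1" and d: "d \<ge> 1" and npos: "\<And>i. i < a \<Longrightarrow> n i \<ge> 1"
    and Sig: "pos_def_mat d \<Sigma>" and W: "sym_idem_nonzero a TW" and S: "sym_idem_nonzero d TS"
  defines "T \<equiv> kron a d TW TS" and "V \<equiv> VN a d n \<Sigma>"
  shows "\<exists>rs. eigvals (T * V * T) = mset rs \<and> (\<forall>r\<in>set rs. r \<ge> 0)
     \<and> mtrace ((T * V) ^\<^sub>m 2) = (\<Sum>r\<leftarrow>rs. r ^ 2) \<and> mtrace ((T * V) ^\<^sub>m 3) = (\<Sum>r\<leftarrow>rs. r ^ 3)
     \<and> (\<Sum>r\<leftarrow>rs. r ^ 2) > 0"
proof -
  define D where "D = a * d"
  have d0: "d > 0" using d by simp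
  note Tp = kron_props[OF W S d0, folded T_def D_def]
  have T: "T \<in> carrier_mat D D" and Tt: "transpose_mat T = T" and TT: "T * T = T" using Tp by auto
  obtain v0 where v0: "v0 \<in> carrier_vec D" "T *\<^sub>v v0 \<noteq> 0\<^sub>v D" using Tp by blast
  have Sg: "\<Sigma> \<in> carrier_mat d d" "transpose_mat \<Sigma> = \<Sigma>"
    "\<And>w. w \<in> carrier_vec d \<Longrightarrow> w \<noteq> 0\<^sub>v d \<Longrightarrow> w \<bullet> (\<Sigma> *\<^sub>v w) > 0"
    using Sig by (auto simp: pos_def_mat_def)
  have V: "V \<in> carrier_mat D D" by (simp add: V_def VN_def D_def)
  have symSg: "\<Sigma> $$ (i,j) = \<Sigma> $$ (j,i)" if "i < d" "j < d" for i j
    using arg_cong[OF Sg(2), of "\<lambda>B. B $$ (i,j)"] that Sg(1) by auto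
  have Vt: "transpose_mat V = V"
    by (rule eq_matI) (use V d0 in \<open>auto simp: V_def VN_def D_def symSg\<close>)
  have Npos: "real (\<Sum>i<a. n i) > 0"
  proof -
    have "n 0 \<ge> 1" using npos a by simp
    moreover have "n 0 \<le> (\<Sum>i<a. n i)" using a by (intro member_le_sum) auto
    ultimately have "(\<Sum>i<a. n i) > 0" by simp
    then show ?thesis by (simp only: of_nat_0_less_iff)
  qed
  have cpos: "real (\<Sum>i<a. n i) / real (n i) > 0" if "i < a" for i
    using Npos npos[OF that] by simp
  have Vquad: "u \<bullet> (V *\<^sub>v u) = (\<Sum>i<a. real (\<Sum>i<a. n i) / real (n i) * (vec d (\<lambda>k. u $ (i*d+k)) \<bullet> (\<Sigma> *\<^sub>v vec d (\<lambda>k. u $ (i*d+k)))))"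
    if "u \<in> carrier_vec D" for u unfolding V_def by (rule VN_quad[OF d0 Sg(1)]) (use that D_def in simp)
  have term_nn: "vec d (\<lambda>k. u $ (i*d+k)) \<bullet> (\<Sigma> *\<^sub>v vec d (\<lambda>k. u $ (i*d+k))) \<ge> 0" for u :: "real Matrix.vec" and i
  proof (cases "vec d (\<lambda>k. u $ (i*d+k)) = 0\<^sub>v d")
    case True then show ?thesis using Sg(1) by simp
  next
    case False then show ?thesis using Sg(3)[of "vec d (\<lambda>k. u $ (i*d+k))"] by simp
  qed
  have Vnn: "u \<bullet> (V *\<^sub>v u) \<ge> 0" if "u \<in> carrier_vec D" for u
    unfolding Vquad[OF that] using cpos term_nn by (intro sum_nonneg mult_nonneg_nonneg) (auto intro: less_imp_le)
  have Vpos: "u \<bullet> (V *\<^sub>v u) > 0" if u: "u \<in> carrier_vec D" "u \<noteq> 0\<^sub>v D" for u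
  proof -
    have "\<exists>r<D. u $ r \<noteq> 0" using u by (auto simp: vec_eq_iff)
    then obtain r where r: "r < D" "u $ r \<noteq> 0" by blast
    define i where "i = r div d"
    have i: "i < a" using r by (simp add: i_def D_def less_mult_imp_div_less)
    have rr: "r = i*d + r mod d" by (simp add: i_def)
    have "vec d (\<lambda>k. u $ (i*d+k)) \<noteq> 0\<^sub>v d"
    proof
      assume "vec d (\<lambda>k. u $ (i*d+k)) = 0\<^sub>v d"
      then have "vec d (\<lambda>k. u $ (i*d+k)) $ (r mod d) = 0" using d0 by simp
      then show False using r rr d0 by (simp del: div_mult_mod_eq)
    qed
    then have "vec d (\<lambda>k. u $ (i*d+k)) \<bullet> (\<Sigma> *\<^sub>v vec d (\<lambda>k. u $ (i*d+k))) > 0" using Sg(3) by simp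
    with cpos[OF i] have posi: "real (\<Sum>i<a. n i) / real (n i) * (vec d (\<lambda>k. u $ (i*d+k)) \<bullet> (\<Sigma> *\<^sub>v vec d (\<lambda>k. u $ (i*d+k)))) > 0"
      using mult_pos_pos by blast
    show ?thesis unfolding Vquad[OF u(1)]
    proof (rule sum_pos2[of _ i])
      fix j assume "j \<in> {..<a}"
      then show "0 \<le> real (\<Sum>i<a. n i) / real (n j) * (vec d (\<lambda>k. u $ (j*d+k)) \<bullet> (\<Sigma> *\<^sub>v vec d (\<lambda>k. u $ (j*d+k))))"
        using mult_nonneg_nonneg[OF less_imp_le[OF cpos] term_nn] by simp
    qed (use i posi in auto)
  qed
  define M where "M = T * V * T"
  have M: "M \<in> carrier_mat D D" using T V by (simp add: M_def)
  have Mt: "transpose_mat M = M"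
    unfolding M_def using T V Tt Vt
    by (simp add: transpose_mult[of _ D D _ D] assoc_mult_mat[of _ D D _ D _ D])
  have quadM: "v \<bullet> (M *\<^sub>v v) = (T *\<^sub>v v) \<bullet> (V *\<^sub>v (T *\<^sub>v v))" if v: "v \<in> carrier_vec D" for v
  proof -
    have "M *\<^sub>v v = T *\<^sub>v (V *\<^sub>v (T *\<^sub>v v))"
      unfolding M_def using T V v by (simp add: assoc_mult_mat_vec[of _ D D _ D])
    then have "v \<bullet> (M *\<^sub>v v) = v \<bullet> (T *\<^sub>v (V *\<^sub>v (T *\<^sub>v v)))" by simp
    also have "\<dots> = (transpose_mat T *\<^sub>v v) \<bullet> (V *\<^sub>v (T *\<^sub>v v))"
      by (rule transpose_vec_mult_scalar[symmetric]) (use T V v in auto)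
    finally show ?thesis using Tt by simp
  qed
  obtain rs where cp: "char_poly M = (\<Prod>r\<leftarrow>rs. [:-r,1:])" and len: "length rs = D"
    using real_sym_char_poly_split[OF M Mt] by blast
  have eig: "eigvals M = mset rs" unfolding eigvals_def cp by (rule proots_prod_lin)
  have nonneg: "r \<ge> 0" if r: "r \<in> set rs" for r
  proof -
    have "poly (char_poly M) r = 0" unfolding cp using r by (auto simp: poly_prod_list_zero_iff)
    then have "eigenvalue M r" using eigenvalue_root_char_poly[OF M] by simp
    then obtain v where "eigenvector M v r" unfolding eigenvalue_def by blast
    then have v: "v \<in> carrier_vec D" "v \<noteq> 0\<^sub>v D" and ev: "M *\<^sub>v v = r \<cdot>\<^sub>v v"
      using M by (auto simp: eigenvector_def)
    have "v \<bullet> (M *\<^sub>v v) = r * (v \<bullet> v)" unfolding ev using v by simp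
    moreover have "v \<bullet> (M *\<^sub>v v) \<ge> 0" unfolding quadM[OF v(1)] using Vnn T v by simp
    moreover have "v \<bullet> v > 0" by (rule self_scalar_pos[OF v])
    ultimately show ?thesis by (simp add: zero_le_mult_iff)
  qed
  define X where "X = T * V"
  have X: "X \<in> carrier_mat D D" using T V by (simp add: X_def)
  have TX: "T * X = X" unfolding X_def using T V TT by (simp add: assoc_mult_mat[symmetric, of T D D T D V D])
  have MX: "M = X * T" by (simp add: M_def X_def)
  have tr2: "mtrace (X ^\<^sub>m 2) = mtrace (M ^\<^sub>m 2)"
  proof -
    have "M ^\<^sub>m 2 = M * M" by (rule pow2_mat[OF M])
    also have "\<dots> = X * (T * X) * T" unfolding MX using X T
      by (simp add: assoc_mult_mat[of _ D D _ D _ D])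
    also have "\<dots> = (X * X) * T" unfolding TX ..
    finally have e: "M ^\<^sub>m 2 = (X * X) * T" .
    have "mtrace ((X * X) * T) = mtrace (T * (X * X))" by (rule mtrace_comm[of _ D D]) (use X T in auto)
    also have "T * (X * X) = (T * X) * X" by (rule assoc_mult_mat[symmetric]) (use X T in auto)
    finally show ?thesis using pow2_mat[OF X] e TX by simp
  qed
  have tr3: "mtrace (X ^\<^sub>m 3) = mtrace (M ^\<^sub>m 3)"
  proof -
    have "M ^\<^sub>m 3 = M * M * M" by (rule pow3_mat[OF M])
    also have "\<dots> = X * (T * X) * (T * X) * T" unfolding MX using X T
      by (simp add: assoc_mult_mat[of _ D D _ D _ D])
    also have "\<dots> = (X * X * X) * T" unfolding TX ..
    finally have e: "M ^\<^sub>m 3 = (X * X * X) * T" .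
    have "mtrace ((X * X * X) * T) = mtrace (T * (X * X * X))" by (rule mtrace_comm[of _ D D]) (use X T in auto)
    also have "T * (X * X * X) = (T * (X * X)) * X" by (rule assoc_mult_mat[symmetric]) (use X T in auto)
    also have "T * (X * X) = (T * X) * X" by (rule assoc_mult_mat[symmetric]) (use X T in auto)
    finally show ?thesis using pow3_mat[OF X] e TX by simp
  qed
  have s2: "mtrace (M ^\<^sub>m 2) = (\<Sum>r\<leftarrow>rs. r ^ 2)" by (rule trace_pow_eigs[OF M cp])
  have s3: "mtrace (M ^\<^sub>m 3) = (\<Sum>r\<leftarrow>rs. r ^ 3)" by (rule trace_pow_eigs[OF M cp])
  have Mnz: "M \<noteq> 0\<^sub>m D D"
  proof
    assume "M = 0\<^sub>m D D"
    moreover have "0\<^sub>m D D *\<^sub>v v0 = 0\<^sub>v D" by (rule eq_vecI) (use v0 in \<open>auto simp: scalar_prod_def\<close>)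
    ultimately have "v0 \<bullet> (M *\<^sub>v v0) = 0" using v0 by simp
    moreover have "v0 \<bullet> (M *\<^sub>v v0) > 0" unfolding quadM[OF v0(1)] using Vpos T v0 by simp
    ultimately show False by simp
  qed
  obtain p q where pq: "p < D" "q < D" "M $$ (p,q) \<noteq> 0" using nonzero_entry[OF M Mnz] by blast
  have symM: "M $$ (i,j) = M $$ (j,i)" if "i < D" "j < D" for i j
    using arg_cong[OF Mt, of "\<lambda>B. B $$ (i,j)"] that M by auto
  have "mtrace (M ^\<^sub>m 2) = (\<Sum>i<D. \<Sum>j<D. (M $$ (i,j))^2)"
    unfolding pow2_mat[OF M] using M
    by (auto simp: mtrace_def scalar_prod_def lessThan_atLeast0 power2_eq_square symM intro!: sum.cong)
  also have "\<dots> > 0"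
  proof (rule sum_pos2[of _ p])
    show "0 < (\<Sum>j<D. (M $$ (p,j))^2)" by (rule sum_pos2[of _ q]) (use pq in auto)
  qed (use pq in \<open>auto intro: sum_nonneg\<close>)
  finally have pos: "(\<Sum>r\<leftarrow>rs. r ^ 2) > 0" using s2 by simp
  show ?thesis using eig nonneg tr2 tr3 s2 s3 pos unfolding M_def X_def by auto
qed



lemma chisq_nonneg: "f > 0 \<Longrightarrow> 0 \<le> chisq_density f t"
  by (auto simp: chisq_density_def intro!: divide_nonneg_pos mult_pos_pos Gamma_real_pos)

lemma chisq_meas[measurable]: "chisq_density f \<in> borel_measurable borel"
  unfolding chisq_density_def by measurable

lemma chisq_2x:
  assumes f: "f > 0"
  shows "ennreal (chisq_density f (2 * x)) =
    ennreal (1 / (2 * Gamma (f/2))) * ennreal (indicator {0..} x * x powr (f/2 - 1) / exp x)"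
proof (cases "x > 0")
  case True
  have g: "Gamma (f/2) > 0" using f by (intro Gamma_real_pos) simp
  define P where "P = 2 powr (f/2 - 1)"
  have P: "P > 0" by (simp add: P_def)
  have "(2 * x) powr (f/2 - 1) = P * x powr (f/2 - 1)"
    using True by (simp add: powr_mult P_def)
  moreover have "2 powr (f/2) = 2 * P" unfolding P_def by (simp add: powr_diff)
  moreover have "exp (- (2 * x) / 2) = exp (- x)" by simp
  moreover have "exp (- x) = 1 / exp x" by (simp add: exp_minus inverse_eq_divide)
  ultimately have "chisq_density f (2 * x) = (1 / (2 * Gamma (f/2))) * (indicator {0..} x * x powr (f/2 - 1) / exp x)"
    using True g P by (simp add: chisq_density_def)
  then show ?thesis using g True
    by (simp add: ennreal_mult[symmetric])
next
  case False
  then show ?thesis by (auto simp: chisq_density_def indicator_def)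
qed

lemma chisq_nn_integral:
  assumes f: "f > 0"
  shows "(\<integral>\<^sup>+ t. ennreal (chisq_density f t) \<partial>lborel) = 1"
proof -
  have g: "Gamma (f/2) > 0" using f by (intro Gamma_real_pos) simp
  have "(\<integral>\<^sup>+ t. ennreal (chisq_density f t) \<partial>lborel) = ennreal \<bar>2::real\<bar> * (\<integral>\<^sup>+ x. ennreal (chisq_density f (0 + 2 * x)) \<partial>lborel)"
    by (rule nn_integral_real_affine[where c=2 and t=0]) auto
  also have "\<dots> = 2 * (\<integral>\<^sup>+ x. ennreal (chisq_density f (2 * x)) \<partial>lborel)" by simp
  also have "\<dots> = 2 * (ennreal (1 / (2 * Gamma (f/2))) * (\<integral>\<^sup>+ x. ennreal (indicator {0..} x * x powr (f/2 - 1) / exp x) \<partial>lborel))"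
    by (simp only: chisq_2x[OF f]) (simp add: nn_integral_cmult)
  also have "(\<integral>\<^sup>+ x. ennreal (indicator {0..} x * x powr (f/2 - 1) / exp x) \<partial>lborel) = ennreal (Gamma (f/2))"
    using Gamma_conv_nn_integral_real[of "f/2"] f by simp
  also have "2 * (ennreal (1 / (2 * Gamma (f/2))) * ennreal (Gamma (f/2))) = 1"
  proof -
    have "2 * (ennreal (1 / (2 * Gamma (f/2))) * ennreal (Gamma (f/2))) = ennreal 2 * ennreal (1 / (2 * Gamma (f/2)) * Gamma (f/2))"
      using g by (subst ennreal_mult) auto
    also have "\<dots> = ennreal (2 * (1 / (2 * Gamma (f/2)) * Gamma (f/2)))"
      using g by (subst ennreal_mult) auto
    also have "2 * (1 / (2 * Gamma (f/2)) * Gamma (f/2)) = 1" using g by simp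
    finally show ?thesis by simp
  qed
  finally show ?thesis .
qed

lemma chisq_integrable:
  assumes f: "f > 0"
  shows "integrable lborel (chisq_density f)" "(\<integral> t. chisq_density f t \<partial>lborel) = 1"
proof -
  show "integrable lborel (chisq_density f)"
    by (rule integrableI_nonneg) (use chisq_nn_integral[OF f] chisq_nonneg[OF f] in auto)
  show "(\<integral> t. chisq_density f t \<partial>lborel) = 1"
    by (subst integral_eq_nn_integral) (use chisq_nn_integral[OF f] chisq_nonneg[OF f] in auto)
qed

lemma measure_density_integral:
  fixes g :: "real \<Rightarrow> real"
  assumes [measurable]: "g \<in> borel_measurable borel" and nn: "\<And>x. 0 \<le> g x" and A[measurable]: "A \<in> sets borel"
  shows "measure (density lborel g) A = (\<integral> x. g x * indicator A x \<partial>lborel)"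
proof -
  have "measure (density lborel g) A = enn2real (\<integral>\<^sup>+ x. ennreal (g x) * indicator A x \<partial>lborel)"
    by (simp add: measure_def emeasure_density)
  also have "(\<integral>\<^sup>+ x. ennreal (g x) * indicator A x \<partial>lborel) = (\<integral>\<^sup>+ x. ennreal (g x * indicator A x) \<partial>lborel)"
    by (intro nn_integral_cong) (auto simp: indicator_def)
  also have "enn2real \<dots> = (\<integral> x. g x * indicator A x \<partial>lborel)"
    by (subst integral_eq_nn_integral) (use nn in auto)
  finally show ?thesis .
qed

lemma cdf_K:
  assumes f: "f > 0"
  shows "cdf (K_distribution f) x = (\<integral> t. chisq_density f t * indicator {..f + sqrt (2*f) * x} t \<partial>lborel)"
proof -
  have s: "sqrt (2*f) > 0" using f by simp
  have pre: "(\<lambda>t. (t - f) / sqrt (2 * f)) -` {..x} = {..f + sqrt (2*f) * x}"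
    using s by (auto simp: pos_divide_le_eq algebra_simps)
  have "cdf (K_distribution f) x = measure (chisq_distribution f) {..f + sqrt (2*f) * x}"
    unfolding cdf_def2 K_distribution_def
    by (subst measure_distr) (auto simp: chisq_distribution_def pre)
  also have "\<dots> = (\<integral> t. chisq_density f t * indicator {..f + sqrt (2*f) * x} t \<partial>lborel)"
    unfolding chisq_distribution_def by (rule measure_density_integral) (auto intro: chisq_nonneg[OF f])
  finally show ?thesis .
qed




lemma DCT_ev:
  fixes s :: "nat \<Rightarrow> real \<Rightarrow> real" and w f :: "real \<Rightarrow> real"
  assumes [measurable]: "f \<in> borel_measurable lborel" "\<And>i. s i \<in> borel_measurable lborel"
    and w: "integrable lborel w"
    and lim: "AE x in lborel. (\<lambda>i. s i x) \<longlonglongrightarrow> f x"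
    and bound: "eventually (\<lambda>i. AE x in lborel. norm (s i x) \<le> w x) sequentially"
  shows "(\<lambda>i. integral\<^sup>L lborel (s i)) \<longlonglongrightarrow> integral\<^sup>L lborel f"
proof -
  obtain N where N: "\<And>n. n \<ge> N \<Longrightarrow> AE x in lborel. norm (s n x) \<le> w x"
    using bound by (auto simp: eventually_sequentially)
  have "(\<lambda>i. integral\<^sup>L lborel (s (i + N))) \<longlonglongrightarrow> integral\<^sup>L lborel f"
  proof (rule integral_dominated_convergence[OF _ _ w])
    show "AE x in lborel. (\<lambda>i. s (i + N) x) \<longlonglongrightarrow> f x"
      using lim by eventually_elim (rule LIMSEQ_ignore_initial_segment)
    show "AE x in lborel. norm (s (i + N) x) \<le> w x" for i by (rule N) simp
  qed auto
  then show ?thesis by (rule LIMSEQ_offset)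
qed

lemma chisq_pos_eq: "t > 0 \<Longrightarrow> chisq_density f t = t powr (f/2 - 1) * exp (- t/2) / (2 powr (f/2) * Gamma (f/2))"
  by (simp add: chisq_density_def)

lemma chisq_tendsto:
  assumes lim: "g \<longlonglongrightarrow> f0" and f0: "f0 > 0" and t: "t > 0"
  shows "(\<lambda>m. chisq_density (g m) t) \<longlonglongrightarrow> chisq_density f0 t"
proof -
  have G: "Gamma (f0/2) > 0" using f0 by (intro Gamma_real_pos) simp
  have nz: "f0/2 \<notin> \<int>\<^sub>\<le>\<^sub>0" using f0 by (auto elim!: nonpos_Ints_cases)
  have "(\<lambda>m. t powr (g m/2 - 1) * exp (- t/2) / (2 powr (g m/2) * Gamma (g m/2)))
     \<longlonglongrightarrow> t powr (f0/2 - 1) * exp (- t/2) / (2 powr (f0/2) * Gamma (f0/2))"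
    using t G by (intro tendsto_intros tendsto_Gamma lim nz) auto
  then show ?thesis using t by (simp add: chisq_pos_eq)
qed

lemma K_cont:
  assumes fpos: "\<And>m. f m > 0" and lim: "f \<longlonglongrightarrow> 1"
  shows "(\<lambda>m. cdf (K_distribution (f m)) x) \<longlonglongrightarrow> cdf (K_distribution 1) x"
proof -
  define c where "c m = f m + sqrt (2 * f m) * x" for m
  define c0 where "c0 = 1 + sqrt 2 * x"
  have c_lim: "c \<longlonglongrightarrow> c0" unfolding c_def c0_def
    using lim by (auto intro!: tendsto_eq_intros)
  define B :: real where "B = 1 / (2 powr (1/2) * Gamma (1/2)) + 1"
  have Bl: "(\<lambda>m. 1 / (2 powr (f m/2) * Gamma (f m/2))) \<longlonglongrightarrow> 1 / (2 powr (1/2) * Gamma (1/2))"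
  proof -
    have g12: "Gamma (1/2::real) > 0" by (rule Gamma_real_pos) simp
    have t1: "(\<lambda>m. f m / 2) \<longlonglongrightarrow> 1/2" using tendsto_divide[OF lim tendsto_const[of 2]] by simp
    have t2: "(\<lambda>m. Gamma (f m/2)) \<longlonglongrightarrow> Gamma (1/2)" by (rule tendsto_Gamma[OF t1]) (auto elim!: nonpos_Ints_cases)
    have t3: "(\<lambda>m. 2 powr (f m/2)) \<longlonglongrightarrow> 2 powr (1/2)" by (rule tendsto_powr[OF tendsto_const t1]) simp
    have p2: "2 powr (1/2::real) > 0" by simp
    have nz: "2 powr (1/2) * Gamma (1/2::real) \<noteq> 0" using mult_pos_pos[OF p2 g12] by linarith
    show ?thesis by (rule tendsto_divide[OF tendsto_const tendsto_mult[OF t3 t2] nz])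
  qed
  have evB: "eventually (\<lambda>m. 1 / (2 powr (f m/2) * Gamma (f m/2)) \<le> B) sequentially"
    using order_tendstoD(2)[OF Bl, of B] unfolding B_def by (auto elim: eventually_mono)
  have evf: "eventually (\<lambda>m. 1/2 \<le> f m \<and> f m \<le> 3/2) sequentially"
  proof -
    have e1: "eventually (\<lambda>m. 1/2 < f m) sequentially" by (rule order_tendstoD(1)[OF lim]) simp
    have e2: "eventually (\<lambda>m. f m < 3/2) sequentially" by (rule order_tendstoD(2)[OF lim]) simp
    from e1 e2 show ?thesis by eventually_elim auto
  qed
  define w where "w t = B * (2 powr (1/4) * Gamma (1/4) * chisq_density (1/2) t + 2 powr (3/4) * Gamma (3/4) * chisq_density (3/2) t)" for t
  have w_int: "integrable lborel w"
    unfolding w_def using chisq_integrable(1)[of "1/2"] chisq_integrable(1)[of "3/2"] by auto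
  have wpos: "w t = B * ((t powr (-3/4) + t powr (-1/4)) * exp (- t/2))" if "t > 0" for t
  proof -
    have g1: "Gamma (1/4::real) > 0" "Gamma (3/4::real) > 0" by (auto intro: Gamma_real_pos)
    have g2: "Gamma (1/4::real) \<noteq> 0" "Gamma (3/4::real) \<noteq> 0" using g1 by linarith+
    show ?thesis using that g2 by (simp add: w_def chisq_pos_eq field_simps)
  qed
  have bound: "eventually (\<lambda>m. AE t in lborel. norm (chisq_density (f m) t * indicator {..c m} t) \<le> w t) sequentially"
    using evB evf
  proof eventually_elim
    case (elim m)
    show ?case
    proof (rule AE_I2)
      fix t :: real
      show "norm (chisq_density (f m) t * indicator {..c m} t) \<le> w t"
      proof (cases "t > 0")
        case False
        then show ?thesis
          by (auto simp: w_def chisq_density_def indicator_def)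
      next
        case t: True
        have G: "Gamma (f m/2) > 0" using fpos[of m] by (intro Gamma_real_pos) simp
        have pw: "t powr (f m/2 - 1) \<le> t powr (-3/4) + t powr (-1/4)"
        proof (cases "t \<le> 1")
          case True
          then have "t powr (f m/2 - 1) \<le> t powr (-3/4)" using elim t by (intro powr_mono') auto
          then show ?thesis by (smt (verit) powr_ge_zero)
        next
          case False
          then have "t powr (f m/2 - 1) \<le> t powr (-1/4)" using elim t by (intro powr_mono) auto
          then show ?thesis by (smt (verit) powr_ge_zero)
        qed
        have "norm (chisq_density (f m) t * indicator {..c m} t) \<le> chisq_density (f m) t"
          using chisq_nonneg[OF fpos[of m], of t] by (auto simp: indicator_def)
        also have "\<dots> = (1 / (2 powr (f m/2) * Gamma (f m/2))) * (t powr (f m/2 - 1) * exp (- t/2))"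
          using t by (simp add: chisq_pos_eq)
        also have "\<dots> \<le> B * ((t powr (-3/4) + t powr (-1/4)) * exp (- t/2))"
        proof -
          have "0 \<le> 1 / (2 powr (f m/2) * Gamma (f m/2))" using G by (intro divide_nonneg_pos) auto
          then have "0 \<le> B" using elim by linarith
          then show ?thesis using elim pw G by (intro mult_mono) auto
        qed
        also have "\<dots> = w t" using wpos[OF t] by simp
        finally show ?thesis .
      qed
    qed
  qed
  have AEne: "AE t in lborel. t \<noteq> 0 \<and> t \<noteq> c0"
    using AE_lborel_singleton[of 0] AE_lborel_singleton[of c0] by eventually_elim auto
  have ptw: "AE t in lborel. (\<lambda>m. chisq_density (f m) t * indicator {..c m} t) \<longlonglongrightarrow> chisq_density 1 t * indicator {..c0} t"
    using AEne
  proof eventually_elim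
    case (elim t)
    have ind: "(\<lambda>m. indicator {..c m} t :: real) \<longlonglongrightarrow> indicator {..c0} t"
    proof (cases "t < c0")
      case True
      have "eventually (\<lambda>m. t < c m) sequentially" using order_tendstoD(1)[OF c_lim True] .
      then have "eventually (\<lambda>m. indicator {..c m} t = (indicator {..c0} t :: real)) sequentially"
        by eventually_elim (use True in \<open>auto simp: indicator_def\<close>)
      then show ?thesis by (rule tendsto_eventually)
    next
      case False
      then have tc: "t > c0" using elim by auto
      have "eventually (\<lambda>m. c m < t) sequentially" using order_tendstoD(2)[OF c_lim tc] .
      then have "eventually (\<lambda>m. indicator {..c m} t = (indicator {..c0} t :: real)) sequentially"
        by eventually_elim (use tc in \<open>auto simp: indicator_def\<close>)
      then show ?thesis by (rule tendsto_eventually)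
    qed
    show ?case
    proof (cases "t > 0")
      case True
      show ?thesis by (intro tendsto_mult chisq_tendsto[OF lim] ind) (use True in auto)
    next
      case False
      then show ?thesis by (simp add: chisq_density_def)
    qed
  qed
  have "(\<lambda>m. \<integral>t. chisq_density (f m) t * indicator {..c m} t \<partial>lborel) \<longlonglongrightarrow> (\<integral>t. chisq_density 1 t * indicator {..c0} t \<partial>lborel)"
    by (rule DCT_ev[OF _ _ w_int ptw bound]) auto
  then show ?thesis using fpos by (simp add: cdf_K c_def c0_def)
qed



lemma ln_bound_pos:
  fixes u :: real assumes u: "u \<ge> 0"
  shows "ln (1 + u) - u \<le> - (u^2 / (2 * (1 + u)))"
proof -
  define Fx where "Fx v = 2 * v + v^2 - 2 * (1 + v) * ln (1 + v)" for v :: real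
  have "Fx 0 \<le> Fx u"
  proof (rule DERIV_nonneg_imp_nondecreasing[OF u])
    fix x :: real assume x: "0 \<le> x" "x \<le> u"
    have "(Fx has_real_derivative (2 + 2 * x - 2 * (ln (1 + x) + 1))) (at x)"
      unfolding Fx_def using x by (auto intro!: derivative_eq_intros simp: power2_eq_square algebra_simps) (simp add: add_divide_distrib[symmetric] divide_eq_eq)
    moreover have "2 + 2 * x - 2 * (ln (1 + x) + 1) \<ge> 0"
      using ln_add_one_self_le_self[of x] x by simp
    ultimately show "\<exists>y. (Fx has_real_derivative y) (at x) \<and> 0 \<le> y" by auto
  qed
  then have "2 * (1 + u) * ln (1 + u) \<le> 2 * u + u^2" by (simp add: Fx_def)
  then have "ln (1 + u) \<le> (2 * u + u^2) / (2 * (1 + u))" using u by (simp add: field_simps)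
  also have "(2 * u + u^2) / (2 * (1 + u)) = u - u^2 / (2 * (1 + u))" using u by (simp add: field_simps power2_eq_square)
  finally show ?thesis by simp
qed

lemma ln_bound_neg:
  fixes u :: real assumes u: "-1 < u" "u \<le> 0"
  shows "ln (1 + u) - u \<le> - (u^2 / 2)"
proof -
  define \<psi> where "\<psi> v = ln (1 + v) - v + v^2 / 2" for v :: real
  have "\<psi> u \<le> \<psi> 0"
  proof (rule DERIV_nonneg_imp_nondecreasing[OF u(2)])
    fix x :: real assume x: "u \<le> x" "x \<le> 0"
    have "(\<psi> has_real_derivative (1 / (1 + x) - 1 + x)) (at x)"
      unfolding \<psi>_def using x u by (auto intro!: derivative_eq_intros simp: field_simps power2_eq_square)
    moreover have "1 / (1 + x) - 1 + x = x^2 / (1 + x)"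
      using x u by (simp add: field_simps power2_eq_square)
    moreover have "x^2 / (1 + x) \<ge> 0" using x u by simp
    ultimately show "\<exists>y. (\<psi> has_real_derivative y) (at x) \<and> 0 \<le> y" by auto
  qed
  then show ?thesis by (simp add: \<psi>_def)
qed


definition hs :: "real \<Rightarrow> real" where "hs f = sqrt (f/2)"
definition hh :: "real \<Rightarrow> real \<Rightarrow> real" where
  "hh f y = (if 0 < 1 + y / hs f then (1 + y / hs f) powr (f/2 - 1) * exp (- (hs f * y)) else 0)"
definition CC :: "real \<Rightarrow> real" where
  "CC f = sqrt (2*f) * f powr (f/2 - 1) * exp (- f/2) / (2 powr (f/2) * Gamma (f/2))"

lemma hh_meas[measurable]: "hh f \<in> borel_measurable borel"
  unfolding hh_def by measurable

lemma hh_nonneg: "0 \<le> hh f y"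
  by (simp add: hh_def)

lemma CC_pos: "f > 0 \<Longrightarrow> CC f > 0"
  unfolding CC_def by (intro divide_pos_pos mult_pos_pos Gamma_real_pos) auto

lemma G_eq:
  assumes f: "f > 0"
  shows "sqrt (2*f) * chisq_density f (f + sqrt (2*f) * y) = CC f * hh f y"
proof -
  define s where "s = hs f"
  have s: "s > 0" using f by (simp add: s_def hs_def)
  have c0: "sqrt (2*f) = 2 * s"
  proof -
    have e: "2*f = 4 * (f/2)" by simp
    have "sqrt (2*f) = sqrt (4 * (f/2))" by (subst e) (rule refl)
    also have "\<dots> = sqrt 4 * sqrt (f/2)" by (rule real_sqrt_mult)
    also have "sqrt 4 = (2::real)" by (simp add: real_sqrt_eq_iff)
    finally show ?thesis by (simp add: s_def hs_def)
  qed
  have fs: "f = 2 * s^2" using f by (simp add: s_def hs_def)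
  have t: "f + sqrt (2*f) * y = f * (1 + y / s)"
  proof -
    have "f + sqrt (2*f) * y = f + 2 * s * y" unfolding c0 by simp
    also have "\<dots> = f * (1 + y / s)" using s unfolding fs by (simp add: field_simps power2_eq_square)
    finally show ?thesis .
  qed
  show ?thesis
  proof (cases "0 < 1 + y / s")
    case True
    have tp: "f * (1 + y / s) > 0" using True f by simp
    have "(f * (1 + y / s)) powr (f/2 - 1) = f powr (f/2 - 1) * (1 + y / s) powr (f/2 - 1)"
      using True f by (simp add: powr_mult)
    moreover have "exp (- (f * (1 + y / s)) / 2) = exp (- f/2) * exp (- (s * y))"
    proof -
      have h: "- (f * (1 + y / s)) / 2 = - f/2 + - (s * y)"
        using s by (simp add: fs field_simps power2_eq_square)
      show ?thesis by (simp only: h exp_add)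
    qed
    ultimately have "chisq_density f (f * (1 + y / s)) = (f powr (f/2 - 1) * exp (- f/2) / (2 powr (f/2) * Gamma (f/2))) * hh f y"
      using True tp by (simp add: chisq_pos_eq hh_def s_def[symmetric])
    then show ?thesis unfolding t CC_def by simp
  next
    case False
    then have "f * (1 + y / s) \<le> 0" using f by (simp add: mult_nonneg_nonpos)
    then show ?thesis using False unfolding t by (simp add: chisq_density_def hh_def s_def[symmetric])
  qed
qed

lemma cdf_ratio:
  assumes f: "f > 0"
  shows "integrable lborel (hh f)" "(\<integral>y. hh f y \<partial>lborel) = 1 / CC f"
    "cdf (K_distribution f) x = (\<integral>y. hh f y * indicator {..x} y \<partial>lborel) / (\<integral>y. hh f y \<partial>lborel)"
proof -
  define c0 where "c0 = sqrt (2*f)"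
  have c0: "c0 > 0" using f by (simp add: c0_def)
  have C: "CC f > 0" by (rule CC_pos[OF f])
  have hh_eq: "hh f y = c0 * chisq_density f (f + c0 * y) / CC f" for y
    using G_eq[OF f, of y] C by (simp add: c0_def)
  have A: "integrable lborel (\<lambda>y. chisq_density f (f + c0 * y))"
    by (rule lborel_integrable_real_affine[OF chisq_integrable(1)[OF f]]) (use c0 in simp)
  show int: "integrable lborel (hh f)"
    unfolding hh_eq by (intro integrable_divide integrable_mult_right A)
  have "1 = (\<integral>t. chisq_density f t \<partial>lborel)" using chisq_integrable(2)[OF f] by simp
  also have "\<dots> = \<bar>c0\<bar> *\<^sub>R (\<integral>y. chisq_density f (f + c0 * y) \<partial>lborel)"
    by (rule lborel_integral_real_affine) (use c0 in simp)
  also have "\<dots> = (\<integral>y. c0 * chisq_density f (f + c0 * y) \<partial>lborel)" using c0 by simp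
  also have "\<dots> = (\<integral>y. CC f * hh f y \<partial>lborel)"
  proof -
    have "(\<lambda>y. c0 * chisq_density f (f + c0 * y)) = (\<lambda>y. CC f * hh f y)"
      using C by (auto simp: hh_eq fun_eq_iff)
    then show ?thesis by simp
  qed
  also have "\<dots> = CC f * (\<integral>y. hh f y \<partial>lborel)" by simp
  finally have one: "CC f * (\<integral>y. hh f y \<partial>lborel) = 1" by simp
  then show I: "(\<integral>y. hh f y \<partial>lborel) = 1 / CC f" using C by (simp add: field_simps)
  have ind: "indicator {..f + c0 * x} (f + c0 * y) = (indicator {..x} y :: real)" for y
    using c0 by (auto simp: indicator_def)
  have fe: "(\<lambda>y. c0 * (chisq_density f (f + c0 * y) * indicator {..x} y)) = (\<lambda>y. CC f * (hh f y * indicator {..x} y))"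
    using C by (auto simp: hh_eq fun_eq_iff)
  have "cdf (K_distribution f) x = (\<integral>t. chisq_density f t * indicator {..f + c0 * x} t \<partial>lborel)"
    using cdf_K[OF f] by (simp add: c0_def)
  also have "\<dots> = \<bar>c0\<bar> *\<^sub>R (\<integral>y. chisq_density f (f + c0 * y) * indicator {..f + c0 * x} (f + c0 * y) \<partial>lborel)"
    by (rule lborel_integral_real_affine) (use c0 in simp)
  also have "\<dots> = c0 * (\<integral>y. chisq_density f (f + c0 * y) * indicator {..x} y \<partial>lborel)"
    using c0 by (simp add: ind)
  also have "\<dots> = (\<integral>y. c0 * (chisq_density f (f + c0 * y) * indicator {..x} y) \<partial>lborel)"
    by (rule integral_mult_right_zero[symmetric])
  also have "\<dots> = (\<integral>y. CC f * (hh f y * indicator {..x} y) \<partial>lborel)"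
    unfolding fe ..
  also have "\<dots> = CC f * (\<integral>y. hh f y * indicator {..x} y \<partial>lborel)" by simp
  also have "\<dots> = (\<integral>y. hh f y * indicator {..x} y \<partial>lborel) / (\<integral>y. hh f y \<partial>lborel)"
    using I C by simp
  finally show "cdf (K_distribution f) x = (\<integral>y. hh f y * indicator {..x} y \<partial>lborel) / (\<integral>y. hh f y \<partial>lborel)" .
qed

lemma hh_lim:
  assumes lim: "filterlim f at_top sequentially"
  shows "(\<lambda>m. hh (f m) y) \<longlonglongrightarrow> exp (- (y * y / 2))"
proof -
  define E where "E k = (k-1) * ln (1 + y / sqrt k) - sqrt k * y" for k :: real
  have E: "(E \<longlongrightarrow> - (y * y / 2)) at_top" unfolding E_def by real_asymp
  have ev: "eventually (\<lambda>k::real. 0 < 1 + y / sqrt k) at_top" by real_asymp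
  have lim2: "filterlim (\<lambda>m. f m / 2) at_top sequentially"
  proof -
    have "LIM m sequentially. (1/2) * f m :> at_top"
      by (rule filterlim_tendsto_pos_mult_at_top[OF tendsto_const _ lim]) simp
    then show ?thesis by simp
  qed
  have "(\<lambda>m. E (f m / 2)) \<longlonglongrightarrow> - (y * y / 2)"
    by (rule filterlim_compose[OF E lim2])
  then have "(\<lambda>m. exp (E (f m / 2))) \<longlonglongrightarrow> exp (- (y * y / 2))" by (rule tendsto_exp)
  moreover have "eventually (\<lambda>m. exp (E (f m / 2)) = hh (f m) y) sequentially"
    using eventually_compose_filterlim[OF ev lim2]
  proof eventually_elim
    case (elim m)
    have "hh (f m) y = exp ((f m / 2 - 1) * ln (1 + y / sqrt (f m / 2))) * exp (- (sqrt (f m / 2) * y))"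
      using elim by (simp add: hh_def hs_def powr_def)
    also have "\<dots> = exp ((f m / 2 - 1) * ln (1 + y / sqrt (f m / 2)) + - (sqrt (f m / 2) * y))"
      by (rule exp_add[symmetric])
    also have "\<dots> = exp (E (f m / 2))" unfolding E_def by simp
    finally show ?case by simp
  qed
  ultimately show ?thesis by (rule Lim_transform_eventually)
qed



lemma hh_bound:
  assumes f4: "f \<ge> 4"
  shows "hh f y \<le> exp (2 - \<bar>y\<bar> / 4)"
proof (cases "0 < 1 + y / hs f")
  case False
  then show ?thesis by (simp add: hh_def)
next
  case True
  define k where "k = f / 2"
  define s where "s = hs f"
  define u where "u = y / s"
  have k2: "k \<ge> 2" using f4 by (simp add: k_def)
  have sk: "s = sqrt k" by (simp add: s_def hs_def k_def)
  have s1: "s \<ge> 1" unfolding sk using k2 by simp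
  have s2: "s^2 = k" unfolding sk using k2 by simp
  have u1: "0 < 1 + u" using True by (simp add: u_def s_def)
  have yu: "y = s * u" using s1 by (simp add: u_def)
  have sy: "s * y = k * u" unfolding yu s2[symmetric] by (simp add: power2_eq_square)
  have hh: "hh f y = exp ((k - 1) * ln (1 + u)) * exp (- (s * y))"
    using True by (simp add: hh_def powr_def k_def s_def u_def)
  define E where "E = (k - 1) * (ln (1 + u) - u) - u"
  have hhE: "hh f y = exp E"
  proof -
    have "exp ((k - 1) * ln (1 + u)) * exp (- (s * y)) = exp ((k - 1) * ln (1 + u) + - (s * y))"
      by (rule exp_add[symmetric])
    also have "(k - 1) * ln (1 + u) + - (s * y) = E" unfolding sy E_def by (simp add: algebra_simps)
    finally show ?thesis using hh by simp
  qed
  have u2: "u^2 = y^2 / k" unfolding u_def s2[symmetric] by (simp add: power_divide)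
  have ku: "(k - 1) * u^2 \<ge> y^2 / 2"
  proof -
    have "(k - 1) * u^2 - y^2 / 2 = (k - 2) * y^2 / (2 * k)" unfolding u2 using k2 by (simp add: field_simps)
    also have "\<dots> \<ge> 0" using k2 by (intro divide_nonneg_pos mult_nonneg_nonneg) auto
    finally show ?thesis by simp
  qed
  have E_le: "E \<le> 2 - \<bar>y\<bar> / 4"
  proof (cases "y \<ge> 0")
    case True
    have u0: "u \<ge> 0" using True s1 by (simp add: u_def)
    have uy: "u \<le> y" unfolding yu using mult_right_mono[OF s1 u0] by simp
    have L: "ln (1 + u) - u \<le> - (u^2 / (2 * (1 + u)))" by (rule ln_bound_pos[OF u0])
    have "(k - 1) * (ln (1 + u) - u) \<le> (k - 1) * (- (u^2 / (2 * (1 + u))))"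
      using L k2 by (intro mult_left_mono) auto
    also have "\<dots> = - ((k - 1) * u^2 / (2 * (1 + u)))" by simp
    also have "\<dots> \<le> - ((y^2 / 2) / (2 * (1 + y)))"
    proof -
      have "(y^2 / 2) / (2 * (1 + y)) \<le> (y^2 / 2) / (2 * (1 + u))"
        using u0 uy by (intro divide_left_mono) auto
      also have "\<dots> \<le> (k - 1) * u^2 / (2 * (1 + u))"
        using ku u0 by (intro divide_right_mono) auto
      finally show ?thesis by simp
    qed
    also have "\<dots> \<le> 1/4 - y/4"
    proof -
      have "y/4 - 1/4 \<le> (y^2 / 2) / (2 * (1 + y))"
        using True by (simp add: field_simps power2_eq_square)
      then show ?thesis by linarith
    qed
    finally have a: "(k - 1) * (ln (1 + u) - u) \<le> 1/4 - y/4" .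
    have "\<bar>y\<bar> = y" using True by simp
    then have key: "A - u \<le> 2 - \<bar>y\<bar> / 4" if "A \<le> 1/4 - y/4" for A
      using that u0 by linarith
    show ?thesis unfolding E_def by (rule key[OF a])
  next
    case False
    have u0: "u \<le> 0" "-1 < u" using False s1 u1 by (auto simp: u_def divide_nonpos_pos)
    have L: "ln (1 + u) - u \<le> - (u^2 / 2)" by (rule ln_bound_neg) (use u0 in auto)
    have "(k - 1) * (ln (1 + u) - u) \<le> (k - 1) * (- (u^2 / 2))"
      using L k2 by (intro mult_left_mono) auto
    also have "\<dots> \<le> - (y^2 / 4)" using ku by simp
    finally have a: "(k - 1) * (ln (1 + u) - u) \<le> - (y^2 / 4)" .
    have b: "- (y^2 / 4) + 1 \<le> 2 - \<bar>y\<bar> / 4"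
    proof -
      have "0 \<le> (\<bar>y\<bar> - 1/2)^2" by simp
      then have "0 \<le> \<bar>y\<bar>^2 - \<bar>y\<bar> + 1/4" by (simp add: power2_eq_square algebra_simps)
      then show ?thesis by (simp add: power2_abs)
    qed
    show ?thesis using a b u0 unfolding E_def by simp
  qed
  show ?thesis unfolding hhE using E_le by simp
qed

definition wdom :: "real \<Rightarrow> real" where
  "wdom y = exp 2 * (2 * chisq_density 2 (0 + (1/2) * y) + 2 * chisq_density 2 (0 + (-1/2) * y))"

lemma wdom_int: "integrable lborel wdom"
proof -
  have "integrable lborel (\<lambda>y. chisq_density 2 (0 + (1/2) * y))"
    by (rule lborel_integrable_real_affine[OF chisq_integrable(1)]) auto
  moreover have "integrable lborel (\<lambda>y. chisq_density 2 (0 + (-1/2) * y))"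
    by (rule lborel_integrable_real_affine[OF chisq_integrable(1)]) auto
  ultimately show ?thesis unfolding wdom_def by auto
qed

lemma chisq2: "t > 0 \<Longrightarrow> chisq_density 2 t = exp (- t/2) / 2"
  by (simp add: chisq_density_def)

lemma wdom_eq: "y \<noteq> 0 \<Longrightarrow> wdom y = exp (2 - \<bar>y\<bar> / 4)"
proof (cases "y > 0")
  case True
  then have "wdom y = exp 2 * exp (- y / 4)"
    by (simp add: wdom_def chisq2 chisq_density_def)
  also have "\<dots> = exp (2 - \<bar>y\<bar> / 4)" using True by (simp add: exp_add[symmetric])
  finally show ?thesis .
next
  case False
  assume "y \<noteq> 0"
  then have y: "y < 0" using False by simp
  then have "wdom y = exp 2 * exp (y / 4)"
    by (simp add: wdom_def chisq2 chisq_density_def)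
  also have "\<dots> = exp (2 - \<bar>y\<bar> / 4)" using y by (simp add: exp_add[symmetric])
  finally show ?thesis .
qed

lemma K_normal:
  assumes fpos: "\<And>m. f m > 0" and lim: "filterlim f at_top sequentially"
  shows "(\<lambda>m. cdf (K_distribution (f m)) x) \<longlonglongrightarrow> cdf std_normal_distribution x"
proof -
  define e where "e y = exp (- (y * y / 2))" for y :: real
  have e_eq: "e y = sqrt (2 * pi) * std_normal_density y" for y
    by (simp add: e_def std_normal_density_def power2_eq_square)
  have Ie: "(\<integral>y. e y \<partial>lborel) = sqrt (2 * pi)"
    unfolding e_eq by simp
  have ev4: "eventually (\<lambda>m. 4 \<le> f m) sequentially"
    using lim by (simp add: filterlim_at_top)
  have AE0: "AE y in lborel. y \<noteq> 0" by (rule AE_lborel_singleton)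
  have bnd: "eventually (\<lambda>m. AE y in lborel. norm (hh (f m) y * indicator {..x} y) \<le> wdom y) sequentially"
    using ev4
  proof eventually_elim
    case (elim m)
    show ?case using AE0
    proof eventually_elim
      case (elim y)
      have "norm (hh (f m) y * indicator {..x} y) \<le> hh (f m) y"
        using hh_nonneg[of "f m" y] by (auto simp: indicator_def)
      also have "\<dots> \<le> exp (2 - \<bar>y\<bar> / 4)" by (rule hh_bound) fact
      also have "\<dots> = wdom y" using wdom_eq[OF elim] by simp
      finally show ?case .
    qed
  qed
  have bnd2: "eventually (\<lambda>m. AE y in lborel. norm (hh (f m) y) \<le> wdom y) sequentially"
    using ev4
  proof eventually_elim
    case (elim m)
    show ?case using AE0
    proof eventually_elim
      case (elim y)
      have "norm (hh (f m) y) = hh (f m) y" using hh_nonneg[of "f m" y] by simp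
      also have "\<dots> \<le> exp (2 - \<bar>y\<bar> / 4)" by (rule hh_bound) fact
      also have "\<dots> = wdom y" using wdom_eq[OF elim] by simp
      finally show ?case .
    qed
  qed
  have I1: "(\<lambda>m. \<integral>y. hh (f m) y * indicator {..x} y \<partial>lborel) \<longlonglongrightarrow> (\<integral>y. e y * indicator {..x} y \<partial>lborel)"
  proof (rule DCT_ev[OF _ _ wdom_int _ bnd])
    show "AE y in lborel. (\<lambda>m. hh (f m) y * indicator {..x} y) \<longlonglongrightarrow> e y * indicator {..x} y"
      by (intro AE_I2 tendsto_mult tendsto_const) (simp add: e_def hh_lim[OF lim])
  qed (auto simp: e_def)
  have I2: "(\<lambda>m. \<integral>y. hh (f m) y \<partial>lborel) \<longlonglongrightarrow> (\<integral>y. e y \<partial>lborel)"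
  proof (rule DCT_ev[OF _ _ wdom_int _ bnd2])
    show "AE y in lborel. (\<lambda>m. hh (f m) y) \<longlonglongrightarrow> e y"
      by (intro AE_I2) (simp add: e_def hh_lim[OF lim])
  qed (auto simp: e_def)
  have "(\<lambda>m. (\<integral>y. hh (f m) y * indicator {..x} y \<partial>lborel) / (\<integral>y. hh (f m) y \<partial>lborel))
      \<longlonglongrightarrow> (\<integral>y. e y * indicator {..x} y \<partial>lborel) / (\<integral>y. e y \<partial>lborel)"
    by (rule tendsto_divide[OF I1 I2]) (simp add: Ie)
  moreover have "(\<lambda>m. cdf (K_distribution (f m)) x) = (\<lambda>m. (\<integral>y. hh (f m) y * indicator {..x} y \<partial>lborel) / (\<integral>y. hh (f m) y \<partial>lborel))"
    using cdf_ratio(3)[OF fpos] by auto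
  moreover have "cdf std_normal_distribution x = (\<integral>y. e y * indicator {..x} y \<partial>lborel) / (\<integral>y. e y \<partial>lborel)"
  proof -
    have "cdf std_normal_distribution x = (\<integral>y. std_normal_density y * indicator {..x} y \<partial>lborel)"
      unfolding cdf_def2 by (rule measure_density_integral) auto
    also have "\<dots> = (\<integral>y. (e y * indicator {..x} y) / sqrt (2 * pi) \<partial>lborel)"
    proof -
      have "(\<lambda>y. std_normal_density y * indicator {..x} y) = (\<lambda>y. (e y * indicator {..x} y) / sqrt (2 * pi))"
        by (auto simp: e_eq fun_eq_iff)
      then show ?thesis by simp
    qed
    also have "\<dots> = (\<integral>y. e y * indicator {..x} y \<partial>lborel) / (\<integral>y. e y \<partial>lborel)"
      unfolding Ie by simp
    finally show ?thesis .
  qed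
  ultimately show ?thesis by simp
qed



lemma bridge:
  fixes rs :: "real list"
  assumes nn: "\<forall>r\<in>set rs. r \<ge> 0" and pos: "(\<Sum>r\<leftarrow>rs. r^2) > 0"
  defines "bb \<equiv> Max (set rs) / sqrt (\<Sum>r\<leftarrow>rs. r^2)"
    and "FF \<equiv> (\<Sum>r\<leftarrow>rs. r^2)^3 / (\<Sum>r\<leftarrow>rs. r^3)^2"
  shows "0 < bb \<and> 0 < FF \<and> 1 / bb^2 \<le> FF \<and> (\<exists>q. 0 < q \<and> bb^3 \<le> q \<and> q \<le> bb \<and> FF = 1 / q^2)"
proof -
  define s2 where "s2 = (\<Sum>r\<leftarrow>rs. r^2)"
  define s3 where "s3 = (\<Sum>r\<leftarrow>rs. r^3)"
  define lam where "lam = Max (set rs)"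
  have s2: "s2 > 0" using pos by (simp add: s2_def)
  have ne: "rs \<noteq> []" using pos by auto
  have lam_in: "lam \<in> set rs" unfolding lam_def using ne by (intro Max_in) auto
  have le_lam: "r \<le> lam" if "r \<in> set rs" for r unfolding lam_def using that by (intro Max_ge) auto
  have "\<exists>r\<in>set rs. r \<noteq> 0"
  proof (rule ccontr)
    assume "\<not> ?thesis"
    then have "(\<Sum>r\<leftarrow>rs. r^2) = (\<Sum>r\<leftarrow>rs. 0::real)" by (intro arg_cong[where f=sum_list] map_cong) auto
    then show False using pos by simp
  qed
  then obtain r0 where r0: "r0 \<in> set rs" "r0 \<noteq> 0" by blast
  have lam: "lam > 0" using nn r0 le_lam[OF r0(1)] by force
  have s3_le: "s3 \<le> lam * s2"
  proof -
    have "s3 \<le> (\<Sum>r\<leftarrow>rs. lam * r^2)" unfolding s3_def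
    proof (rule sum_list_mono)
      fix r assume r: "r \<in> set rs"
      have "r * r^2 \<le> lam * r^2" using le_lam[OF r] by (intro mult_right_mono) auto
      then show "r^3 \<le> lam * r^2" by (simp add: power3_eq_cube power2_eq_square)
    qed
    also have "\<dots> = lam * s2" unfolding s2_def by (simp add: sum_list_const_mult)
    finally show ?thesis .
  qed
  have s3_ge: "lam^3 \<le> s3" unfolding s3_def
    by (rule member_le_sum_list) (use lam_in nn in auto)
  have s3: "s3 > 0" using s3_ge lam by (smt (verit) zero_less_power)
  define q where "q = s3 / (s2 * sqrt s2)"
  have sq: "sqrt s2 > 0" using s2 by simp
  have bbq: "bb = lam / sqrt s2" by (simp add: bb_def lam_def s2_def)
  have FFq: "FF = s2^3 / s3^2" by (simp add: FF_def s2_def s3_def)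
  have sq3: "sqrt s2 ^ 3 = s2 * sqrt s2" using s2 by (simp add: power3_eq_cube)
  have q0: "q > 0" using s3 s2 sq by (simp add: q_def)
  have bb0: "bb > 0" using lam sq by (simp add: bbq)
  have "bb^3 = lam^3 / (s2 * sqrt s2)" unfolding bbq by (simp add: power_divide sq3)
  also have "\<dots> \<le> q" unfolding q_def using s3_ge s2 sq by (intro divide_right_mono) auto
  finally have q1: "bb^3 \<le> q" .
  have "q \<le> lam * s2 / (s2 * sqrt s2)" unfolding q_def using s3_le s2 sq by (intro divide_right_mono) auto
  also have "\<dots> = bb" unfolding bbq using s2 by simp
  finally have q2: "q \<le> bb" .
  have FF1: "FF = 1 / q^2"
  proof -
    have "(s2 * sqrt s2)^2 = s2^3" using s2 by (simp add: power_mult_distrib power3_eq_cube power2_eq_square)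
    then show ?thesis unfolding FFq q_def using s2 s3 by (simp add: power_divide)
  qed
  have FF0: "FF > 0" using q0 FF1 by simp
  have "1 / bb^2 \<le> 1 / q^2" using q0 q2 by (intro divide_left_mono power_mono mult_pos_pos) auto
  then show ?thesis using bb0 FF0 q0 q1 q2 FF1 by auto
qed


lemma sm_list: "sum_mset (image_mset g (mset xs)) = sum_list (map g xs)"
  by (induction xs) auto

theorem theorem3:
  fixes a d :: "nat \<Rightarrow> nat"
    and n :: "nat \<Rightarrow> nat \<Rightarrow> nat"
    and \<Sigma> TW TS :: "nat \<Rightarrow> real Matrix.mat"
    and \<mu> :: "nat \<Rightarrow> nat \<Rightarrow> real Matrix.vec"
  defines "N \<equiv> \<lambda>m. \<Sum>i<a m. n m i"
    and "nmax \<equiv> \<lambda>m. Max (n m ` {..<a m})"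
    and "T \<equiv> \<lambda>m. kron (a m) (d m) (TW m) (TS m)"
    and "V \<equiv> \<lambda>m. VN (a m) (d m) (n m) (\<Sigma> m)"
    and "muvec \<equiv> \<lambda>m. Matrix.vec (a m * d m) (\<lambda>r. \<mu> m (r div d m) $ (r mod d m))"
  assumes a_pos: "\<And>m. a m \<ge> 1"
    and d_pos: "\<And>m. d m \<ge> 1"
    and n_pos: "\<And>m i. i < a m \<Longrightarrow> n m i \<ge> 1"
    and Sigma: "\<And>m. pos_def_mat (d m) (\<Sigma> m)"
    and TW: "\<And>m. sym_idem_nonzero (a m) (TW m)"
    and TS: "\<And>m. sym_idem_nonzero (d m) (TS m)"
    and mu_dim: "\<And>m i. i < a m \<Longrightarrow> \<mu> m i \<in> carrier_vec (d m)"
    and H0: "\<And>m. T m *\<^sub>v muvec m = 0\<^sub>v (a m * d m)"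
    and N_lim: "filterlim (\<lambda>m. real (N m)) at_top sequentially"
    and framework:
      "(filterlim (\<lambda>m. real (a m)) at_top sequentially \<and> bounded (range (\<lambda>m. real (d m)))
          \<and> bounded (range (\<lambda>m. real (nmax m))))
     \<or> (filterlim (\<lambda>m. real (a m)) at_top sequentially \<and> filterlim (\<lambda>m. real (d m)) at_top sequentially
          \<and> bounded (range (\<lambda>m. real (nmax m))))
     \<or> (filterlim (\<lambda>m. real (a m)) at_top sequentially \<and> filterlim (\<lambda>m. real (nmax m)) at_top sequentially
          \<and> bounded (range (\<lambda>m. real (d m))))
     \<or> (filterlim (\<lambda>m. real (d m)) at_top sequentially \<and> filterlim (\<lambda>m. real (nmax m)) at_top sequentially
          \<and> bounded (range (\<lambda>m. real (a m))))
     \<or> (filterlim (\<lambda>m. real (a m)) at_top sequentially \<and> filterlim (\<lambda>m. real (d m)) at_top sequentially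
          \<and> filterlim (\<lambda>m. real (nmax m)) at_top sequentially)"
  shows "((\<lambda>m. beta1 (T m * V m * T m)) \<longlonglongrightarrow> 0 \<longrightarrow>
            weak_conv_m (\<lambda>m. K_distribution (fP (T m) (V m))) std_normal_distribution)
       \<and> ((\<lambda>m. beta1 (T m * V m * T m)) \<longlonglongrightarrow> 1 \<longrightarrow>
            weak_conv_m (\<lambda>m. K_distribution (fP (T m) (V m)))
              (distr (chisq_distribution 1) borel (\<lambda>x. (x - 1) / sqrt 2)))"
  proof -
  have LA: "\<forall>m. \<exists>rs. eigvals (T m * V m * T m) = mset rs \<and> (\<forall>r\<in>set rs. r \<ge> 0)
     \<and> mtrace ((T m * V m) ^\<^sub>m 2) = (\<Sum>r\<leftarrow>rs. r ^ 2) \<and> mtrace ((T m * V m) ^\<^sub>m 3) = (\<Sum>r\<leftarrow>rs. r ^ 3)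
     \<and> (\<Sum>r\<leftarrow>rs. r ^ 2) > 0"
  proof
    fix m
    show "\<exists>rs. eigvals (T m * V m * T m) = mset rs \<and> (\<forall>r\<in>set rs. r \<ge> 0)
     \<and> mtrace ((T m * V m) ^\<^sub>m 2) = (\<Sum>r\<leftarrow>rs. r ^ 2) \<and> mtrace ((T m * V m) ^\<^sub>m 3) = (\<Sum>r\<leftarrow>rs. r ^ 3)
     \<and> (\<Sum>r\<leftarrow>rs. r ^ 2) > 0"
      unfolding T_def V_def by (rule LA_main[OF a_pos d_pos n_pos Sigma TW TS])
  qed
  from choice[OF LA] obtain R where R: "\<And>m. eigvals (T m * V m * T m) = mset (R m) \<and> (\<forall>r\<in>set (R m). r \<ge> 0)
     \<and> mtrace ((T m * V m) ^\<^sub>m 2) = (\<Sum>r\<leftarrow>R m. r ^ 2) \<and> mtrace ((T m * V m) ^\<^sub>m 3) = (\<Sum>r\<leftarrow>R m. r ^ 3)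
     \<and> (\<Sum>r\<leftarrow>R m. r ^ 2) > 0" by blast
  define b where "b m = beta1 (T m * V m * T m)" for m
  define F where "F m = fP (T m) (V m)" for m
  have bF: "0 < b m \<and> 0 < F m \<and> 1 / (b m)^2 \<le> F m \<and> (\<exists>q. 0 < q \<and> (b m)^3 \<le> q \<and> q \<le> b m \<and> F m = 1 / q^2)" for m
  proof -
    have bm: "b m = Max (set (R m)) / sqrt (\<Sum>r\<leftarrow>R m. r^2)"
      using R[of m] by (simp add: b_def beta1_def sm_list)
    have Fm: "F m = (\<Sum>r\<leftarrow>R m. r^2)^3 / (\<Sum>r\<leftarrow>R m. r^3)^2"
      using R[of m] by (simp add: F_def fP_def)
    have nn: "\<forall>r\<in>set (R m). r \<ge> 0" using R[of m] by blast
    have ps: "(\<Sum>r\<leftarrow>R m. r^2) > 0" using R[of m] by blast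
    show ?thesis unfolding bm Fm by (rule bridge[OF nn ps])
  qed
  have Fpos: "\<And>m. F m > 0" using bF by blast
  have bpos: "\<And>m. b m > 0" using bF by blast
  have Fge: "\<And>m. 1 / (b m)^2 \<le> F m" using bF by blast
  have weak: "weak_conv_m (\<lambda>m. K_distribution (F m)) M"
    if "\<And>x. (\<lambda>m. cdf (K_distribution (F m)) x) \<longlonglongrightarrow> cdf M x" for M
    unfolding weak_conv_m_def weak_conv_def using that by blast
  show ?thesis
  proof (intro conjI impI)
    assume b0: "(\<lambda>m. beta1 (T m * V m * T m)) \<longlonglongrightarrow> 0"
    then have b0': "(\<lambda>m. (b m)^2) \<longlonglongrightarrow> 0" unfolding b_def[symmetric]
      using tendsto_power[of b 0 sequentially 2] by simp
    have "LIM m sequentially. inverse ((b m)^2) :> at_top"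
      by (rule filterlim_inverse_at_top[OF b0']) (intro always_eventually allI, rule zero_less_power[OF bpos])
    then have "LIM m sequentially. F m :> at_top"
      by (rule filterlim_at_top_mono) (intro always_eventually allI, simp add: Fge inverse_eq_divide)
    then have "\<And>x. (\<lambda>m. cdf (K_distribution (F m)) x) \<longlonglongrightarrow> cdf std_normal_distribution x"
      by (intro K_normal Fpos)
    then show "weak_conv_m (\<lambda>m. K_distribution (fP (T m) (V m))) std_normal_distribution"
      using weak[of std_normal_distribution] unfolding F_def by blast
  next
    assume b1: "(\<lambda>m. beta1 (T m * V m * T m)) \<longlonglongrightarrow> 1"
    then have b1': "b \<longlonglongrightarrow> 1" unfolding b_def .
    from bF have "\<forall>m. \<exists>q. 0 < q \<and> (b m)^3 \<le> q \<and> q \<le> b m \<and> F m = 1 / q^2" by blast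
    from choice[OF this] obtain Q where Q: "\<And>m. 0 < Q m \<and> (b m)^3 \<le> Q m \<and> Q m \<le> b m \<and> F m = 1 / (Q m)^2" by blast
    have b3: "(\<lambda>m. (b m)^3) \<longlonglongrightarrow> 1" using tendsto_power[OF b1', of 3] by simp
    have "Q \<longlonglongrightarrow> 1"
    proof (rule tendsto_sandwich[OF _ _ b3 b1'])
      show "eventually (\<lambda>m. (b m)^3 \<le> Q m) sequentially" by (intro always_eventually allI) (use Q in blast)
      show "eventually (\<lambda>m. Q m \<le> b m) sequentially" by (intro always_eventually allI) (use Q in blast)
    qed
    then have "(\<lambda>m. 1 / (Q m)^2) \<longlonglongrightarrow> 1 / 1^2"
      by (intro tendsto_divide tendsto_const tendsto_power) auto
    moreover have "(\<lambda>m. 1 / (Q m)^2) = F" using Q by (auto simp: fun_eq_iff)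
    ultimately have F1: "F \<longlonglongrightarrow> 1" by simp
    have "\<And>x. (\<lambda>m. cdf (K_distribution (F m)) x) \<longlonglongrightarrow> cdf (K_distribution 1) x"
      by (rule K_cont[OF Fpos F1])
    moreover have "K_distribution 1 = distr (chisq_distribution 1) borel (\<lambda>x. (x - 1) / sqrt 2)"
      by (simp add: K_distribution_def)
    ultimately show "weak_conv_m (\<lambda>m. K_distribution (fP (T m) (V m)))
              (distr (chisq_distribution 1) borel (\<lambda>x. (x - 1) / sqrt 2))"
      using weak[of "K_distribution 1"] unfolding F_def by simp
  qed
qed

end
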